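(* For $i=1,2$, let $G_i$ be an $m_i$-$\gamma_t$-critical graph of order $\Delta(G_i)+m_i$ with $\delta(G_i)\ge 2$, and let $v_i\in V(G_i)$ be a vertex of maximum degree $\Delta(G_i)$. Suppose that for each $i$, every connected component of the induced subgraph $G_i[V(G_i)\setminus N[v_i]]$ is isomorphic to the path $P_2$. Then the vertex amalgamation $G$ of $G_1$ and $G_2$ at $v_1$ and $v_2$ is an $(m_1+m_2-1)$-$\gamma_t$-critical graph of order $\Delta(G)+m_1+m_2-1$, where $\Delta(G)=\Delta(G_1)+\Delta(G_2)$.
   Context: All graphs are finite and simple. $N(x)$ is the neighborhood of $x$, $N[x]=N(x)\cup\{x\}$, $G[X]$ the subgraph induced by $X$, $P_k$ the path on $k$ vertices. A set $S\subseteq V(G)$ is a total dominating set if every vertex of $G$ is adjacent to some vertex of $S$; $\gamma_t(G)$ is the minimum size of such a set. A leaf is a vertex of degree one. A graph $G$ with no isolated vertex is $\gamma_t$-critical if for every vertex $v$ not adjacent to a leaf, $\gamma_t(G-v)<\gamma_t(G)$; it is $m$-$\gamma_t$-critical if moreover $\gamma_t(G)=m$. The vertex amalgamation of $G_1$ and $G_2$ at $v_1\in V(G_1)$, $v_2\in V(G_2)$ is the graph with vertex set $(V(G_1)\setminus\{v_1\})\cup(V(G_2)\setminus\{v_2\})\cup\{v\}$ ($v$ a new vertex, the vertex sets of $G_1,G_2$ disjoint) and edge set $E(G_1-v_1)\cup E(G_2-v_2)\cup\{vu: v_1u\in E(G_1)\}\cup\{vw: v_2w\in E(G_2)\}$.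 *)

theory Defs
  imports Main "HOL-Library.Extended_Nat"
begin

definition graph :: "'a set \<Rightarrow> ('a \<Rightarrow> 'a \<Rightarrow> bool) \<Rightarrow> bool" where
  "graph V E \<longleftrightarrow> finite V \<and> (\<forall>x y. E x y \<longrightarrow> x \<in> V \<and> y \<in> V)
     \<and> (\<forall>x y. E x y \<longrightarrow> E y x) \<and> (\<forall>x. \<not> E x x)"

definition nbhd :: "'a set \<Rightarrow> ('a \<Rightarrow> 'a \<Rightarrow> bool) \<Rightarrow> 'a \<Rightarrow> 'a set" where
  "nbhd V E x = {y \<in> V. E x y}"

definition cnbhd :: "'a set \<Rightarrow> ('a \<Rightarrow> 'a \<Rightarrow> bool) \<Rightarrow> 'a \<Rightarrow> 'a set" where
  "cnbhd V E x = insert x (nbhd V E x)"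

definition deg :: "'a set \<Rightarrow> ('a \<Rightarrow> 'a \<Rightarrow> bool) \<Rightarrow> 'a \<Rightarrow> nat" where
  "deg V E x = card (nbhd V E x)"

definition max_deg :: "'a set \<Rightarrow> ('a \<Rightarrow> 'a \<Rightarrow> bool) \<Rightarrow> nat" where
  "max_deg V E = Max (deg V E ` V)"

definition min_deg :: "'a set \<Rightarrow> ('a \<Rightarrow> 'a \<Rightarrow> bool) \<Rightarrow> nat" where
  "min_deg V E = Min (deg V E ` V)"

definition is_leaf :: "'a set \<Rightarrow> ('a \<Rightarrow> 'a \<Rightarrow> bool) \<Rightarrow> 'a \<Rightarrow> bool" where
  "is_leaf V E x \<longleftrightarrow> x \<in> V \<and> deg V E x = 1"

definition no_isolated :: "'a set \<Rightarrow> ('a \<Rightarrow> 'a \<Rightarrow> bool) \<Rightarrow> bool" where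
  "no_isolated V E \<longleftrightarrow> (\<forall>x\<in>V. \<exists>y\<in>V. E x y)"

definition induced :: "('a \<Rightarrow> 'a \<Rightarrow> bool) \<Rightarrow> 'a set \<Rightarrow> 'a \<Rightarrow> 'a \<Rightarrow> bool" where
  "induced E X x y \<longleftrightarrow> x \<in> X \<and> y \<in> X \<and> E x y"

definition total_dom :: "'a set \<Rightarrow> ('a \<Rightarrow> 'a \<Rightarrow> bool) \<Rightarrow> 'a set \<Rightarrow> bool" where
  "total_dom V E S \<longleftrightarrow> S \<subseteq> V \<and> (\<forall>x\<in>V. \<exists>y\<in>S. E x y)"

text \<open>Total domination number, as an extended natural (infinity if no total dominating set exists,
  i.e. if the graph has an isolated vertex).\<close>
definition gamma_t :: "'a set \<Rightarrow> ('a \<Rightarrow> 'a \<Rightarrow> bool) \<Rightarrow> enat" where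
  "gamma_t V E = Inf {enat (card S) | S. total_dom V E S}"

definition gamma_t_critical :: "'a set \<Rightarrow> ('a \<Rightarrow> 'a \<Rightarrow> bool) \<Rightarrow> bool" where
  "gamma_t_critical V E \<longleftrightarrow> no_isolated V E \<and>
     (\<forall>v\<in>V. \<not> (\<exists>u. is_leaf V E u \<and> E v u) \<longrightarrow>
        gamma_t (V - {v}) (induced E (V - {v})) < gamma_t V E)"

definition m_gamma_t_critical :: "nat \<Rightarrow> 'a set \<Rightarrow> ('a \<Rightarrow> 'a \<Rightarrow> bool) \<Rightarrow> bool" where
  "m_gamma_t_critical m V E \<longleftrightarrow> gamma_t_critical V E \<and> gamma_t V E = enat m"

definition components :: "'a set \<Rightarrow> ('a \<Rightarrow> 'a \<Rightarrow> bool) \<Rightarrow> 'a set set" where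
  "components V E = (\<lambda>x. {y \<in> V. (induced E V)\<^sup>*\<^sup>* x y}) ` V"

definition iso_path :: "'a set \<Rightarrow> ('a \<Rightarrow> 'a \<Rightarrow> bool) \<Rightarrow> nat \<Rightarrow> bool" where
  "iso_path C E k \<longleftrightarrow> (\<exists>f. bij_betw f {0..<k} C \<and>
      (\<forall>i<k. \<forall>j<k. E (f i) (f j) \<longleftrightarrow> (i + 1 = j \<or> j + 1 = i)))"

text \<open>Vertex amalgamation of (V1,E1) at v1 and (V2,E2) at v2. The vertex sets are made disjoint
  via the sum type; the new vertex v is None.\<close>
definition amal_V :: "'a set \<Rightarrow> 'a \<Rightarrow> 'b set \<Rightarrow> 'b \<Rightarrow> ('a + 'b) option set" where
  "amal_V V1 v1 V2 v2 = insert None (Some ` (Inl ` (V1 - {v1}) \<union> Inr ` (V2 - {v2})))"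

fun amal_E0 :: "('a \<Rightarrow> 'a \<Rightarrow> bool) \<Rightarrow> 'a \<Rightarrow> ('b \<Rightarrow> 'b \<Rightarrow> bool) \<Rightarrow> 'b
    \<Rightarrow> ('a + 'b) option \<Rightarrow> ('a + 'b) option \<Rightarrow> bool" where
  "amal_E0 E1 v1 E2 v2 (Some (Inl a)) (Some (Inl b)) = E1 a b"
| "amal_E0 E1 v1 E2 v2 (Some (Inr a)) (Some (Inr b)) = E2 a b"
| "amal_E0 E1 v1 E2 v2 None (Some (Inl b)) = E1 v1 b"
| "amal_E0 E1 v1 E2 v2 None (Some (Inr b)) = E2 v2 b"
| "amal_E0 E1 v1 E2 v2 (Some (Inl a)) None = E1 a v1"
| "amal_E0 E1 v1 E2 v2 (Some (Inr a)) None = E2 a v2"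
| "amal_E0 E1 v1 E2 v2 _ _ = False"

definition amal_E :: "'a set \<Rightarrow> ('a \<Rightarrow> 'a \<Rightarrow> bool) \<Rightarrow> 'a \<Rightarrow> 'b set \<Rightarrow> ('b \<Rightarrow> 'b \<Rightarrow> bool) \<Rightarrow> 'b
    \<Rightarrow> ('a + 'b) option \<Rightarrow> ('a + 'b) option \<Rightarrow> bool" where
  "amal_E V1 E1 v1 V2 E2 v2 x y \<longleftrightarrow> x \<in> amal_V V1 v1 V2 v2 \<and> y \<in> amal_V V1 v1 V2 v2
     \<and> amal_E0 E1 v1 E2 v2 x y"

end

theory Submission
  imports Defs
begin


lemma gamma_le: "total_dom V E S \<Longrightarrow> gamma_t V E \<le> enat (card S)"
  unfolding gamma_t_def by (auto intro: Inf_lower)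

lemma gamma_lt: "gamma_t V E < enat k \<Longrightarrow> \<exists>S. total_dom V E S \<and> card S < k"
  unfolding gamma_t_def by (auto simp: Inf_less_iff)

lemma gamma_ge: "gamma_t V E = enat m \<Longrightarrow> total_dom V E S \<Longrightarrow> m \<le> card S"
  using gamma_le[of V E S] by simp

lemma gamma_eqI: "total_dom V E S \<Longrightarrow> card S \<le> k \<Longrightarrow> (\<And>S. total_dom V E S \<Longrightarrow> k \<le> card S)
   \<Longrightarrow> gamma_t V E = enat k"
  unfolding gamma_t_def
  by (rule antisym) (auto intro!: Inf_greatest intro: Inf_lower2[of "enat (card S)"])

locale side =
  fixes V :: "'a set" and E and v and m :: nat
  assumes g: "graph V E" and c: "m_gamma_t_critical m V E" and o: "card V = max_deg V E + m"
    and d: "min_deg V E \<ge> 2" and vV: "v \<in> V" and vmax: "deg V E v = max_deg V E"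
    and p: "\<forall>C \<in> components (V - cnbhd V E v) (induced E (V - cnbhd V E v)). iso_path C E 2"
begin

abbreviation "R \<equiv> V - cnbhd V E v"

lemma fin: "finite V" and inV: "E x y \<Longrightarrow> x \<in> V \<and> y \<in> V"
  and sym: "E x y \<Longrightarrow> E y x" and irr: "\<not> E x x"
  using g unfolding graph_def by blast+

lemma deg_le: "x \<in> V \<Longrightarrow> deg V E x \<le> max_deg V E"
  unfolding max_deg_def using fin by auto

lemma deg_ge: "x \<in> V \<Longrightarrow> 2 \<le> deg V E x"
  using d fin unfolding min_deg_def by (meson Min_le finite_imageI image_eqI le_trans)

lemma no_leaf: "\<not> is_leaf V E u"
  using deg_ge unfolding is_leaf_def by fastforce

lemma gam: "gamma_t V E = enat m" using c unfolding m_gamma_t_critical_def by simp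

lemma crit: assumes "z \<in> V" shows "\<exists>T. T \<subseteq> V - {z} \<and> card T < m \<and> (\<forall>y\<in>V-{z}. \<exists>t\<in>T. E y t)"
proof -
  have "gamma_t (V - {z}) (induced E (V - {z})) < enat m"
    using c assms no_leaf unfolding m_gamma_t_critical_def gamma_t_critical_def by auto
  then obtain T where "total_dom (V - {z}) (induced E (V - {z})) T" "card T < m"
    using gamma_lt by blast
  then show ?thesis
    apply (intro exI[of _ T])
    by (auto simp: total_dom_def induced_def)
qed

lemma m_ge2: "2 \<le> m"
proof -
  have "2 \<le> card S" if tS: "total_dom V E S" for S
  proof -
    obtain y where "E v y" "y \<in> S" using tS vV unfolding total_dom_def by blast
    then obtain z where "E y z" "z \<in> S" using tS inV unfolding total_dom_def by blast
    moreover have "finite S" using tS fin unfolding total_dom_def by (meson finite_subset)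
    moreover have "y \<noteq> z" using \<open>E y z\<close> irr by auto
    ultimately have "card {y, z} \<le> card S" using \<open>y \<in> S\<close> by (intro card_mono) auto
    then show ?thesis using \<open>y \<noteq> z\<close> by simp
  qed
  then have "enat 2 \<le> gamma_t V E" unfolding gamma_t_def by (auto intro!: Inf_greatest)
  then show ?thesis using gam by simp
qed

lemma card_R: "card R = m - 1"
proof -
  have "v \<notin> nbhd V E v" using irr unfolding nbhd_def by simp
  then have "card (cnbhd V E v) = max_deg V E + 1"
    using vmax fin unfolding cnbhd_def deg_def nbhd_def by simp
  moreover have "cnbhd V E v \<subseteq> V" using vV unfolding cnbhd_def nbhd_def by auto
  moreover have "finite (cnbhd V E v)" using calculation(2) fin by (rule finite_subset)
  ultimately have "card R = card V - card (cnbhd V E v)" by (intro card_Diff_subset)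
  then show ?thesis using o \<open>card (cnbhd V E v) = max_deg V E + 1\<close> by simp
qed

definition "CC r = {y \<in> R. (induced (induced E R) R)\<^sup>*\<^sup>* r y}"

lemma comp2: assumes "r \<in> R" shows "\<exists>a b. CC r = {a, b} \<and> a \<noteq> b \<and> E a b"
proof -
  have "CC r \<in> components R (induced E R)"
    unfolding components_def CC_def using assms by blast
  then have "iso_path (CC r) E 2" using p by blast
  then obtain f where f: "bij_betw f {0..<2::nat} (CC r)"
     "\<forall>i<2::nat. \<forall>j<2::nat. E (f i) (f j) \<longleftrightarrow> (i + 1 = j \<or> j + 1 = i)"
    unfolding iso_path_def by blast
  have "CC r = f ` {0..<2}" using f(1) by (simp add: bij_betw_def)
  also have "{0..<2::nat} = {0, 1}" by auto
  finally have "CC r = {f 0, f 1}" by simp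
  moreover have "E (f 0) (f 1)" using f(2) by auto
  moreover then have "f 0 \<noteq> f 1" using irr by metis
  ultimately show ?thesis by blast
qed

lemma in_CC: "r \<in> R \<Longrightarrow> r \<in> CC r" unfolding CC_def by simp

lemma CC_sub: "CC r \<subseteq> R" unfolding CC_def by auto

lemma nbr_CC: "y \<in> R \<Longrightarrow> r \<in> R \<Longrightarrow> E y r \<Longrightarrow> r \<in> CC y"
  unfolding CC_def by (auto simp: induced_def)

lemma R_nbr: assumes "r \<in> R" shows "\<exists>y\<in>R. E r y"
proof -
  obtain a b where ab: "CC r = {a, b}" "a \<noteq> b" "E a b" using comp2 assms by blast
  have "a \<in> R" "b \<in> R" using ab(1) CC_sub by auto
  moreover have "r = a \<or> r = b" using in_CC[OF assms] ab(1) by auto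
  ultimately show ?thesis using ab(3) sym by blast
qed

lemma R_uniq: assumes "y \<in> R" "r \<in> R" "z \<in> R" "E y r" "E y z" shows "r = z"
proof -
  obtain a b where ab: "CC y = {a, b}" "a \<noteq> b" "E a b" using comp2 assms by blast
  have "r \<in> CC y" "z \<in> CC y" "y \<in> CC y" using nbr_CC in_CC assms by auto
  moreover have "r \<noteq> y" "z \<noteq> y" using assms irr by auto
  ultimately show ?thesis using ab(1) by auto
qed

lemma R_N: assumes "r \<in> R" shows "\<exists>u. E v u \<and> E r u"
proof (rule ccontr)
  assume nn: "\<nexists>u. E v u \<and> E r u"
  obtain y where y: "y \<in> R" "E r y" using R_nbr assms by blast
  have "nbhd V E r \<subseteq> {y}"
  proof
    fix z assume "z \<in> nbhd V E r"
    then have z: "z \<in> V" "E r z" unfolding nbhd_def by auto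
    have "z \<noteq> v" using z(2) assms sym unfolding cnbhd_def nbhd_def by auto
    moreover have "\<not> E v z" using nn z by auto
    ultimately have "z \<in> R" using z(1) unfolding cnbhd_def nbhd_def by auto
    then show "z \<in> {y}" using R_uniq[of r y z] assms y z by simp
  qed
  then have "card (nbhd V E r) \<le> card {y}" by (intro card_mono) auto
  then have "card (nbhd V E r) \<le> 1" by simp
  then show False using deg_ge[of r] assms unfolding deg_def by simp
qed

lemma lemA: assumes "X \<subseteq> V - {v}" "\<forall>r\<in>R. \<exists>x\<in>X. E r x" "\<forall>x\<in>X. \<not> E v x"
  shows "R \<subseteq> X"
proof
  fix r assume r: "r \<in> R"
  have inR: "x \<in> R" if "x \<in> X" for x
    using that assms(1,3) unfolding cnbhd_def nbhd_def by auto
  obtain x where x: "x \<in> X" "E r x" using assms(2) r by blast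
  obtain y where y: "y \<in> X" "E x y" using assms(2) inR[OF x(1)] by blast
  have "r = y" using R_uniq[of x r y] inR x y r sym by blast
  then show "r \<in> X" using y by simp
qed

lemma finR: "finite R" using fin by simp

lemma side_bound2: assumes "X \<subseteq> V - {v}" "\<forall>y\<in>V-{v}. (\<exists>x\<in>X. E y x) \<or> (b \<and> E y v)"
  "\<exists>x\<in>X. E v x"
  shows "m \<le> card X + (if b then 1 else 0)"
proof -
  let ?T = "X \<union> (if b then {v} else {})"
  have "total_dom V E ?T"
    unfolding total_dom_def using assms vV by auto
  then have "m \<le> card ?T" using gamma_ge gam by blast
  also have "card ?T \<le> card X + card (if b then {v} else {} :: 'a set)" by (rule card_Un_le)
  finally show ?thesis by (cases b) auto
qed

lemma side_bound1: assumes "X \<subseteq> V - {v}" "\<forall>y\<in>V-{v}. (\<exists>x\<in>X. E y x) \<or> (b \<and> E y v)"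
  shows "m - 1 \<le> card X"
proof (cases "\<exists>x\<in>X. E v x")
  case True
  then show ?thesis using side_bound2[OF assms True] by (cases b) auto
next
  case False
  have "\<forall>r\<in>R. \<exists>x\<in>X. E r x"
  proof
    fix r assume r: "r \<in> R"
    then have "r \<in> V - {v}" "\<not> E r v" using sym unfolding cnbhd_def nbhd_def by auto
    then show "\<exists>x\<in>X. E r x" using assms(2) by blast
  qed
  then have "R \<subseteq> X" using lemA assms(1) False by blast
  moreover have "finite X" using assms(1) fin finite_subset by blast
  ultimately have "card R \<le> card X" by (rule card_mono[rotated])
  then show ?thesis using card_R by simp
qed

lemma upper: "\<exists>D. D \<subseteq> V - {v} \<and> (\<forall>d\<in>D. E v d) \<and> D \<noteq> {} \<and> card D \<le> m - 1 \<and> (\<forall>r\<in>R. \<exists>d\<in>D. E r d)"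
proof -
  define f where "f r = (SOME u. E v u \<and> E r u)" for r
  have f: "E v (f r) \<and> E r (f r)" if "r \<in> R" for r
    unfolding f_def using R_N[OF that] by (rule someI_ex)
  have "R \<noteq> {}" using card_R m_ge2 by (intro notI) simp
  moreover have "card (f ` R) \<le> m - 1" using card_image_le[OF finR, of f] card_R by simp
  moreover have "f ` R \<subseteq> V - {v}" using f inV irr by blast
  ultimately show ?thesis using f by (intro exI[of _ "f ` R"]) auto
qed

end


lemma amalV_None[simp]: "None \<in> amal_V V1 v1 V2 v2"
  and amalV_Inl[simp]: "Some (Inl a) \<in> amal_V V1 v1 V2 v2 \<longleftrightarrow> a \<in> V1 \<and> a \<noteq> v1"
  and amalV_Inr[simp]: "Some (Inr b) \<in> amal_V V1 v1 V2 v2 \<longleftrightarrow> b \<in> V2 \<and> b \<noteq> v2"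
  by (auto simp: amal_V_def)

lemma amalV_cases: "x \<in> amal_V V1 v1 V2 v2 \<Longrightarrow>
   x = None \<or> (\<exists>a. x = Some (Inl a) \<and> a \<in> V1 \<and> a \<noteq> v1) \<or> (\<exists>b. x = Some (Inr b) \<and> b \<in> V2 \<and> b \<noteq> v2)"
  by (auto simp: amal_V_def)

lemma amal_fin: "finite V1 \<Longrightarrow> finite V2 \<Longrightarrow> finite (amal_V V1 v1 V2 v2)"
  by (simp add: amal_V_def)

lemma amal_card: assumes "finite V1" "finite V2" "v1 \<in> V1" "v2 \<in> V2"
  shows "card (amal_V V1 v1 V2 v2) = card V1 + card V2 - 1"
proof -
  have "card (amal_V V1 v1 V2 v2) = Suc (card (Some ` (Inl ` (V1 - {v1}) \<union> Inr ` (V2 - {v2}))))"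
    unfolding amal_V_def using assms by (subst card_insert_disjoint) auto
  also have "card (Some ` (Inl ` (V1 - {v1}) \<union> Inr ` (V2 - {v2})))
     = card (Inl ` (V1 - {v1}) \<union> Inr ` (V2 - {v2}) :: ('a + 'b) set)"
    by (rule card_image) simp
  also have "\<dots> = card (Inl ` (V1 - {v1}) :: ('a + 'b) set) + card (Inr ` (V2 - {v2}) :: ('a + 'b) set)"
    using assms by (intro card_Un_disjoint) auto
  also have "\<dots> = card (V1 - {v1}) + card (V2 - {v2})"
    by (simp add: card_image)
  also have "\<dots> = (card V1 - 1) + (card V2 - 1)" using assms by simp
  finally have eq: "card (amal_V V1 v1 V2 v2) = Suc ((card V1 - 1) + (card V2 - 1))" .
  have "card V1 \<noteq> 0" "card V2 \<noteq> 0" using assms by auto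
  then show ?thesis using eq by linarith
qed

definition emb1 :: "'a \<Rightarrow> 'a \<Rightarrow> ('a + 'b) option" where
  "emb1 v1 a = (if a = v1 then None else Some (Inl a))"
definition emb2 :: "'b \<Rightarrow> 'b \<Rightarrow> ('a + 'b) option" where
  "emb2 v2 b = (if b = v2 then None else Some (Inr b))"

lemma emb1_in: "a \<in> V1 \<Longrightarrow> emb1 v1 a \<in> amal_V V1 v1 V2 v2" by (simp add: emb1_def)
lemma emb2_in: "b \<in> V2 \<Longrightarrow> emb2 v2 b \<in> amal_V V1 v1 V2 v2" by (simp add: emb2_def)

lemma emb1_E: "a \<in> V1 \<Longrightarrow> b \<in> V1 \<Longrightarrow> \<not> E1 v1 v1 \<Longrightarrow>
   amal_E V1 E1 v1 V2 E2 v2 (emb1 v1 a) (emb1 v1 b) \<longleftrightarrow> E1 a b"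
  by (auto simp: emb1_def amal_E_def)
lemma emb2_E: "a \<in> V2 \<Longrightarrow> b \<in> V2 \<Longrightarrow> \<not> E2 v2 v2 \<Longrightarrow>
   amal_E V1 E1 v1 V2 E2 v2 (emb2 v2 a) (emb2 v2 b) \<longleftrightarrow> E2 a b"
  by (auto simp: emb2_def amal_E_def)

lemma amal_E_simps[simp]:
  "amal_E V1 E1 v1 V2 E2 v2 (Some (Inl a)) (Some (Inr b)) = False"
  "amal_E V1 E1 v1 V2 E2 v2 (Some (Inr b)) (Some (Inl a)) = False"
  "amal_E V1 E1 v1 V2 E2 v2 None None = False"
  "amal_E V1 E1 v1 V2 E2 v2 None (Some (Inl a)) \<longleftrightarrow> a \<in> V1 \<and> a \<noteq> v1 \<and> E1 v1 a"
  "amal_E V1 E1 v1 V2 E2 v2 None (Some (Inr b)) \<longleftrightarrow> b \<in> V2 \<and> b \<noteq> v2 \<and> E2 v2 b"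
  "amal_E V1 E1 v1 V2 E2 v2 (Some (Inl a)) None \<longleftrightarrow> a \<in> V1 \<and> a \<noteq> v1 \<and> E1 a v1"
  "amal_E V1 E1 v1 V2 E2 v2 (Some (Inr b)) None \<longleftrightarrow> b \<in> V2 \<and> b \<noteq> v2 \<and> E2 b v2"
  "amal_E V1 E1 v1 V2 E2 v2 (Some (Inl a)) (Some (Inl a')) \<longleftrightarrow> a \<in> V1 \<and> a \<noteq> v1 \<and> a' \<in> V1 \<and> a' \<noteq> v1 \<and> E1 a a'"
  "amal_E V1 E1 v1 V2 E2 v2 (Some (Inr b)) (Some (Inr b')) \<longleftrightarrow> b \<in> V2 \<and> b \<noteq> v2 \<and> b' \<in> V2 \<and> b' \<noteq> v2 \<and> E2 b b'"
  by (auto simp: amal_E_def)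

lemma os_cases: "(x = None \<Longrightarrow> P) \<Longrightarrow> (\<And>a. x = Some (Inl a) \<Longrightarrow> P) \<Longrightarrow> (\<And>b. x = Some (Inr b) \<Longrightarrow> P) \<Longrightarrow> P"
  by (metis option.exhaust sum.exhaust)

lemma amal_graph: "graph V1 E1 \<Longrightarrow> graph V2 E2 \<Longrightarrow> graph (amal_V V1 v1 V2 v2) (amal_E V1 E1 v1 V2 E2 v2)"
  unfolding graph_def
  apply (intro conjI)
     apply (simp add: amal_fin)
    apply (simp add: amal_E_def)
   apply (intro allI impI)
   subgoal for x y by (cases x rule: os_cases; cases y rule: os_cases) auto
  apply (intro allI)
  subgoal for x by (cases x rule: os_cases) auto
  done



lemma nbhd_None: assumes "graph V1 E1" "graph V2 E2"
  shows "nbhd (amal_V V1 v1 V2 v2) (amal_E V1 E1 v1 V2 E2 v2) None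
     = Some ` Inl ` nbhd V1 E1 v1 \<union> Some ` Inr ` nbhd V2 E2 v2"
proof (rule set_eqI)
  fix x show "x \<in> nbhd (amal_V V1 v1 V2 v2) (amal_E V1 E1 v1 V2 E2 v2) None
     \<longleftrightarrow> x \<in> Some ` Inl ` nbhd V1 E1 v1 \<union> Some ` Inr ` nbhd V2 E2 v2"
    using assms by (cases x rule: os_cases) (auto simp: nbhd_def graph_def)
qed

lemma deg_None: assumes "graph V1 E1" "graph V2 E2"
  shows "deg (amal_V V1 v1 V2 v2) (amal_E V1 E1 v1 V2 E2 v2) None = deg V1 E1 v1 + deg V2 E2 v2"
proof -
  have f: "finite (nbhd V1 E1 v1)" "finite (nbhd V2 E2 v2)"
    using assms unfolding graph_def nbhd_def by auto
  have "card (Some ` Inl ` nbhd V1 E1 v1 \<union> Some ` Inr ` nbhd V2 E2 v2 :: ('a+'b) option set)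
      = card (Some ` Inl ` nbhd V1 E1 v1 :: ('a+'b) option set) + card (Some ` Inr ` nbhd V2 E2 v2 :: ('a+'b) option set)"
    using f by (intro card_Un_disjoint) auto
  also have "\<dots> = card (nbhd V1 E1 v1) + card (nbhd V2 E2 v2)"
    by (simp add: card_image inj_on_def)
  finally show ?thesis unfolding deg_def using nbhd_None[OF assms] by simp
qed

lemma nbhd_Inl: assumes "graph V1 E1" "a \<in> V1" "a \<noteq> v1" "v1 \<in> V1"
  shows "nbhd (amal_V V1 v1 V2 v2) (amal_E V1 E1 v1 V2 E2 v2) (Some (Inl a)) = emb1 v1 ` nbhd V1 E1 a"
proof (rule set_eqI)
  fix x show "x \<in> nbhd (amal_V V1 v1 V2 v2) (amal_E V1 E1 v1 V2 E2 v2) (Some (Inl a))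
     \<longleftrightarrow> x \<in> emb1 v1 ` nbhd V1 E1 a"
    using assms by (cases x rule: os_cases) (auto simp: nbhd_def graph_def emb1_def image_iff)
qed

lemma nbhd_Inr: assumes "graph V2 E2" "b \<in> V2" "b \<noteq> v2" "v2 \<in> V2"
  shows "nbhd (amal_V V1 v1 V2 v2) (amal_E V1 E1 v1 V2 E2 v2) (Some (Inr b)) = emb2 v2 ` nbhd V2 E2 b"
proof (rule set_eqI)
  fix x show "x \<in> nbhd (amal_V V1 v1 V2 v2) (amal_E V1 E1 v1 V2 E2 v2) (Some (Inr b))
     \<longleftrightarrow> x \<in> emb2 v2 ` nbhd V2 E2 b"
    using assms by (cases x rule: os_cases) (auto simp: nbhd_def graph_def emb2_def image_iff)
qed

lemma card_split: fixes S :: "('a + 'b) option set" assumes "finite S"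
  shows "card S = card {a. Some (Inl a) \<in> S} + card {b. Some (Inr b) \<in> S} + (if None \<in> S then 1 else 0)"
proof -
  let ?A = "{a. Some (Inl a) \<in> S}" and ?B = "{b. Some (Inr b) \<in> S}"
  have f0: "finite (Some -` S)" by (rule finite_vimageI[OF assms]) simp
  have "finite (Inl -` Some -` S)" by (rule finite_vimageI[OF f0]) simp
  moreover have "?A = Inl -` Some -` S" by auto
  ultimately have fA: "finite ?A" by simp
  have "finite (Inr -` Some -` S)" by (rule finite_vimageI[OF f0]) simp
  moreover have "?B = Inr -` Some -` S" by auto
  ultimately have fB: "finite ?B" by simp
  have S: "S = (Some ` Inl ` ?A \<union> Some ` Inr ` ?B) \<union> (if None \<in> S then {None} else {})"
  proof (rule set_eqI)
    fix x show "x \<in> S \<longleftrightarrow> x \<in> (Some ` Inl ` ?A \<union> Some ` Inr ` ?B) \<union> (if None \<in> S then {None} else {})"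
      by (cases x rule: os_cases) auto
  qed
  have "card S = card (Some ` Inl ` ?A \<union> Some ` Inr ` ?B) + card (if None \<in> S then {None} else {} :: ('a+'b) option set)"
    using fA fB by (subst S, intro card_Un_disjoint) auto
  also have "card (Some ` Inl ` ?A \<union> Some ` Inr ` ?B) = card (Some ` Inl ` ?A :: ('a+'b) option set) + card (Some ` Inr ` ?B :: ('a+'b) option set)"
    by (rule card_Un_disjoint) (use fA fB in auto)
  also have "card (Some ` Inl ` ?A :: ('a+'b) option set) = card ?A" by (simp add: card_image inj_on_def)
  also have "card (Some ` Inr ` ?B :: ('a+'b) option set) = card ?B" by (simp add: card_image inj_on_def)
  finally show ?thesis by simp
qed



lemma emb1_simps[simp]: "emb1 v1 v1 = None" "c \<noteq> v1 \<Longrightarrow> emb1 v1 c = Some (Inl c)"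
  by (auto simp: emb1_def)
lemma emb2_simps[simp]: "emb2 v2 v2 = None" "c \<noteq> v2 \<Longrightarrow> emb2 v2 c = Some (Inr c)"
  by (auto simp: emb2_def)

lemma cover:
  assumes y: "y \<in> amal_V V1 v1 V2 v2" and vv: "v1 \<in> V1" "v2 \<in> V2"
    and h: "(z1 = v1 \<and> z2 = v2 \<and> y \<noteq> None) \<or> (z2 = v2 \<and> z1 \<noteq> v1 \<and> y \<noteq> Some (Inl z1))
      \<or> (z1 = v1 \<and> z2 \<noteq> v2 \<and> y \<noteq> Some (Inr z2))"
  shows "y \<in> emb1 v1 ` (V1 - {z1}) \<union> emb2 v2 ` (V2 - {z2})"
proof (cases y rule: os_cases)
  case 1
  then have "z1 \<noteq> v1 \<or> z2 \<noteq> v2" using h by auto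
  then show ?thesis
  proof
    assume "z1 \<noteq> v1"
    then have "None \<in> emb1 v1 ` (V1 - {z1})" using vv by (intro rev_image_eqI[of v1]) auto
    then show ?thesis using 1 by blast
  next
    assume "z2 \<noteq> v2"
    then have "None \<in> emb2 v2 ` (V2 - {z2})" using vv by (intro rev_image_eqI[of v2]) auto
    then show ?thesis using 1 by blast
  qed
next
  case (2 a)
  then have a: "a \<in> V1" "a \<noteq> v1" "a \<noteq> z1" using y h by auto
  then have "y \<in> emb1 v1 ` (V1 - {z1})" using 2 by (intro rev_image_eqI[of a]) auto
  then show ?thesis by blast
next
  case (3 b)
  then have b: "b \<in> V2" "b \<noteq> v2" "b \<noteq> z2" using y h by auto
  then have "y \<in> emb2 v2 ` (V2 - {z2})" using 3 by (intro rev_image_eqI[of b]) auto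
  then show ?thesis by blast
qed

lemma notcover:
  assumes h: "(z1 = v1 \<and> z2 = v2 \<and> x = None) \<or> (z2 = v2 \<and> z1 \<noteq> v1 \<and> x = Some (Inl z1))
      \<or> (z1 = v1 \<and> z2 \<noteq> v2 \<and> x = Some (Inr z2))"
  shows "x \<notin> emb1 v1 ` (V1 - {z1}) \<union> emb2 v2 ` (V2 - {z2})"
  using h by (auto simp: emb1_def emb2_def split: if_splits)



theorem mainTheorem2:
  fixes V1 :: "'a set" and E1 :: "'a \<Rightarrow> 'a \<Rightarrow> bool" and v1 :: 'a and m1 :: nat
    and V2 :: "'b set" and E2 :: "'b \<Rightarrow> 'b \<Rightarrow> bool" and v2 :: 'b and m2 :: nat
  assumes g1: "graph V1 E1" and g2: "graph V2 E2"
    and c1: "m_gamma_t_critical m1 V1 E1" and c2: "m_gamma_t_critical m2 V2 E2"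
    and o1: "card V1 = max_deg V1 E1 + m1" and o2: "card V2 = max_deg V2 E2 + m2"
    and d1: "min_deg V1 E1 \<ge> 2" and d2: "min_deg V2 E2 \<ge> 2"
    and v1: "v1 \<in> V1" "deg V1 E1 v1 = max_deg V1 E1"
    and v2: "v2 \<in> V2" "deg V2 E2 v2 = max_deg V2 E2"
    and p1: "\<forall>C \<in> components (V1 - cnbhd V1 E1 v1) (induced E1 (V1 - cnbhd V1 E1 v1)).
               iso_path C E1 2"
    and p2: "\<forall>C \<in> components (V2 - cnbhd V2 E2 v2) (induced E2 (V2 - cnbhd V2 E2 v2)).
               iso_path C E2 2"
  shows "graph (amal_V V1 v1 V2 v2) (amal_E V1 E1 v1 V2 E2 v2)
    \<and> m_gamma_t_critical (m1 + m2 - 1) (amal_V V1 v1 V2 v2) (amal_E V1 E1 v1 V2 E2 v2)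
    \<and> max_deg (amal_V V1 v1 V2 v2) (amal_E V1 E1 v1 V2 E2 v2) = max_deg V1 E1 + max_deg V2 E2
    \<and> card (amal_V V1 v1 V2 v2)
        = max_deg (amal_V V1 v1 V2 v2) (amal_E V1 E1 v1 V2 E2 v2) + (m1 + m2 - 1)"
proof -
  interpret s1: side V1 E1 v1 m1 unfolding side_def using g1 c1 o1 d1 v1 p1 by blast
  interpret s2: side V2 E2 v2 m2 unfolding side_def using g2 c2 o2 d2 v2 p2 by blast
  let ?W = "amal_V V1 v1 V2 v2" and ?F = "amal_E V1 E1 v1 V2 E2 v2"
  have G: "graph ?W ?F" by (rule amal_graph[OF g1 g2])
  have finW: "finite ?W" by (rule amal_fin[OF s1.fin s2.fin])
  have mge: "2 \<le> m1" "2 \<le> m2" by (rule s1.m_ge2, rule s2.m_ge2)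
  have irr1: "\<not> E1 v1 v1" and irr2: "\<not> E2 v2 v2" using s1.irr s2.irr by auto

  have degN: "deg ?W ?F None = max_deg V1 E1 + max_deg V2 E2"
    using deg_None[OF g1 g2] v1 v2 by simp
  have degle: "deg ?W ?F x \<le> max_deg V1 E1 + max_deg V2 E2" if x: "x \<in> ?W" for x
  proof -
    from amalV_cases[OF x] consider "x = None" | a where "x = Some (Inl a)" "a \<in> V1" "a \<noteq> v1"
      | b where "x = Some (Inr b)" "b \<in> V2" "b \<noteq> v2" by blast
    then show ?thesis
    proof cases
      case 1 then show ?thesis using degN by simp
    next
      case (2 a)
      have "nbhd ?W ?F (Some (Inl a)) = emb1 v1 ` nbhd V1 E1 a" by (rule nbhd_Inl[OF g1 2(2,3) v1(1)])
      then have "deg ?W ?F x = card (emb1 v1 ` nbhd V1 E1 a :: ('a+'b) option set)"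
        unfolding deg_def using 2(1) by simp
      also have "\<dots> \<le> deg V1 E1 a" unfolding deg_def
        by (rule card_image_le) (use s1.fin in \<open>simp add: nbhd_def\<close>)
      also have "\<dots> \<le> max_deg V1 E1" by (rule s1.deg_le[OF 2(2)])
      finally show ?thesis by simp
    next
      case (3 b)
      have "nbhd ?W ?F (Some (Inr b)) = emb2 v2 ` nbhd V2 E2 b" by (rule nbhd_Inr[OF g2 3(2,3) v2(1)])
      then have "deg ?W ?F x = card (emb2 v2 ` nbhd V2 E2 b :: ('a+'b) option set)"
        unfolding deg_def using 3(1) by simp
      also have "\<dots> \<le> deg V2 E2 b" unfolding deg_def
        by (rule card_image_le) (use s2.fin in \<open>simp add: nbhd_def\<close>)
      also have "\<dots> \<le> max_deg V2 E2" by (rule s2.deg_le[OF 3(2)])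
      finally show ?thesis by simp
    qed
  qed
  have maxd0: "Max (deg ?W ?F ` ?W) = max_deg V1 E1 + max_deg V2 E2"
  proof (rule Max_eqI)
    show "finite (deg ?W ?F ` ?W)" using finW by simp
    show "\<And>y. y \<in> deg ?W ?F ` ?W \<Longrightarrow> y \<le> max_deg V1 E1 + max_deg V2 E2" using degle by blast
    show "max_deg V1 E1 + max_deg V2 E2 \<in> deg ?W ?F ` ?W" by (rule rev_image_eqI[of None]) (simp_all only: degN amalV_None)
  qed
  have maxd: "max_deg ?W ?F = max_deg V1 E1 + max_deg V2 E2"
    using maxd0 by (simp only: max_deg_def[of ?W ?F])
  have cardW: "card ?W = max_deg ?W ?F + (m1 + m2 - 1)"
  proof -
    have "card ?W = card V1 + card V2 - 1" by (rule amal_card[OF s1.fin s2.fin v1(1) v2(1)])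
    then show ?thesis unfolding maxd using o1 o2 mge by linarith
  qed

  have lower: "m1 + m2 - 1 \<le> card S" if S: "total_dom ?W ?F S" for S
  proof -
    define S1 where "S1 = {a. Some (Inl a) \<in> S}"
    define S2 where "S2 = {b. Some (Inr b) \<in> S}"
    define b where "b = (None \<in> S)"
    have SW: "S \<subseteq> ?W" and dom: "\<forall>x\<in>?W. \<exists>y\<in>S. ?F x y" using S unfolding total_dom_def by auto
    have finS: "finite S" using SW finW finite_subset by blast
    have cS: "card S = card S1 + card S2 + (if b then 1 else 0)"
      unfolding S1_def S2_def b_def by (rule card_split[OF finS])
    have S1sub: "S1 \<subseteq> V1 - {v1}" using SW unfolding S1_def by auto
    have S2sub: "S2 \<subseteq> V2 - {v2}" using SW unfolding S2_def by auto
    have dom1: "\<forall>y\<in>V1-{v1}. (\<exists>x\<in>S1. E1 y x) \<or> (b \<and> E1 y v1)"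
    proof
      fix y assume y: "y \<in> V1 - {v1}"
      then obtain s where s: "s \<in> S" "?F (Some (Inl y)) s" using dom[rule_format, of "Some (Inl y)"] by auto
      then show "(\<exists>x\<in>S1. E1 y x) \<or> (b \<and> E1 y v1)" unfolding S1_def b_def
        by (cases s rule: os_cases) auto
    qed
    have dom2: "\<forall>y\<in>V2-{v2}. (\<exists>x\<in>S2. E2 y x) \<or> (b \<and> E2 y v2)"
    proof
      fix y assume y: "y \<in> V2 - {v2}"
      then obtain s where s: "s \<in> S" "?F (Some (Inr y)) s" using dom[rule_format, of "Some (Inr y)"] by auto
      then show "(\<exists>x\<in>S2. E2 y x) \<or> (b \<and> E2 y v2)" unfolding S2_def b_def
        by (cases s rule: os_cases) auto
    qed
    obtain s where s: "s \<in> S" "?F None s" using dom[rule_format, of None] by auto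
    then have "(\<exists>x\<in>S1. E1 v1 x) \<or> (\<exists>x\<in>S2. E2 v2 x)" unfolding S1_def S2_def
      by (cases s rule: os_cases) auto
    then show ?thesis
    proof
      assume "\<exists>x\<in>S1. E1 v1 x"
      then have "m1 \<le> card S1 + (if b then 1 else 0)" by (rule s1.side_bound2[OF S1sub dom1])
      moreover have "m2 - 1 \<le> card S2" by (rule s2.side_bound1[OF S2sub dom2])
      ultimately show ?thesis using cS by linarith
    next
      assume "\<exists>x\<in>S2. E2 v2 x"
      then have "m2 \<le> card S2 + (if b then 1 else 0)" by (rule s2.side_bound2[OF S2sub dom2])
      moreover have "m1 - 1 \<le> card S1" by (rule s1.side_bound1[OF S1sub dom1])
      ultimately show ?thesis using cS by linarith
    qed
  qed

  from s1.upper obtain D1 where D1c: "D1 \<subseteq> V1 - {v1} \<and> (\<forall>d\<in>D1. E1 v1 d) \<and> D1 \<noteq> {} \<and> card D1 \<le> m1 - 1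
      \<and> (\<forall>r\<in>s1.R. \<exists>d\<in>D1. E1 r d)" ..
  note D1 = conjunct1[OF D1c] conjunct1[OF conjunct2[OF D1c]] conjunct1[OF conjunct2[OF conjunct2[OF D1c]]]
    conjunct1[OF conjunct2[OF conjunct2[OF conjunct2[OF D1c]]]] conjunct2[OF conjunct2[OF conjunct2[OF conjunct2[OF D1c]]]]
  from s2.upper obtain D2 where D2c: "D2 \<subseteq> V2 - {v2} \<and> (\<forall>d\<in>D2. E2 v2 d) \<and> D2 \<noteq> {} \<and> card D2 \<le> m2 - 1
      \<and> (\<forall>r\<in>s2.R. \<exists>d\<in>D2. E2 r d)" ..
  note D2 = conjunct1[OF D2c] conjunct1[OF conjunct2[OF D2c]] conjunct1[OF conjunct2[OF conjunct2[OF D2c]]]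
    conjunct1[OF conjunct2[OF conjunct2[OF conjunct2[OF D2c]]]] conjunct2[OF conjunct2[OF conjunct2[OF conjunct2[OF D2c]]]]
  let ?S = "{None} \<union> (Some ` Inl ` D1 \<union> Some ` Inr ` D2)"
  have tdS: "total_dom ?W ?F ?S"
    unfolding total_dom_def
  proof (intro conjI ballI)
    show "?S \<subseteq> ?W" using D1(1) D2(1) by auto
    fix x assume x: "x \<in> ?W"
    from amalV_cases[OF x] consider "x = None" | a where "x = Some (Inl a)" "a \<in> V1" "a \<noteq> v1"
      | b where "x = Some (Inr b)" "b \<in> V2" "b \<noteq> v2" by blast
    then show "\<exists>y\<in>?S. ?F x y"
    proof cases
      case 1
      obtain d where "d \<in> D1" using D1(3) by blast
      then show ?thesis using 1 D1(1,2) by (intro bexI[of _ "Some (Inl d)"]) auto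
    next
      case (2 a)
      show ?thesis
      proof (cases "E1 v1 a")
        case True then show ?thesis using 2 s1.sym by (intro bexI[of _ None]) auto
      next
        case False
        then have "a \<in> s1.R" using 2 unfolding cnbhd_def nbhd_def by auto
        then obtain d where "d \<in> D1" "E1 a d" using D1(5) by blast
        then show ?thesis using 2 D1(1) by (intro bexI[of _ "Some (Inl d)"]) auto
      qed
    next
      case (3 a)
      show ?thesis
      proof (cases "E2 v2 a")
        case True then show ?thesis using 3 s2.sym by (intro bexI[of _ None]) auto
      next
        case False
        then have "a \<in> s2.R" using 3 unfolding cnbhd_def nbhd_def by auto
        then obtain d where "d \<in> D2" "E2 a d" using D2(5) by blast
        then show ?thesis using 3 D2(1) by (intro bexI[of _ "Some (Inr d)"]) auto
      qed
    qed
  qed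
  have cs1: "card ?S \<le> card {None :: ('a+'b) option} + card (Some ` Inl ` D1 \<union> Some ` Inr ` D2 :: ('a+'b) option set)"
    by (rule card_Un_le)
  have cs2: "card (Some ` Inl ` D1 \<union> Some ` Inr ` D2 :: ('a+'b) option set)
      \<le> card (Some ` Inl ` D1 :: ('a+'b) option set) + card (Some ` Inr ` D2 :: ('a+'b) option set)"
    by (rule card_Un_le)
  have cs3: "card (Some ` Inl ` D1 :: ('a+'b) option set) = card D1"
    by (simp add: card_image inj_on_def)
  have cs4: "card (Some ` Inr ` D2 :: ('a+'b) option set) = card D2"
    by (simp add: card_image inj_on_def)
  have cs5: "card {None :: ('a+'b) option} = 1" by simp
  have cardS: "card ?S \<le> m1 + m2 - 1" using cs1 cs2 cs3 cs4 cs5 D1(4) D2(4) mge by linarith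
  have gam: "gamma_t ?W ?F = enat (m1 + m2 - 1)" by (rule gamma_eqI[OF tdS cardS lower])

  have build: "\<exists>T. card T \<le> m1 + m2 - 2 \<and> T \<subseteq> emb1 v1 ` (V1 - {z1}) \<union> emb2 v2 ` (V2 - {z2})
     \<and> (\<forall>c\<in>V1-{z1}. \<exists>t\<in>T. ?F (emb1 v1 c) t) \<and> (\<forall>c\<in>V2-{z2}. \<exists>t\<in>T. ?F (emb2 v2 c) t)"
    if z: "z1 \<in> V1" "z2 \<in> V2" for z1 z2
  proof -
    obtain T1 where T1: "T1 \<subseteq> V1 - {z1}" "card T1 < m1" "\<forall>y\<in>V1-{z1}. \<exists>t\<in>T1. E1 y t"
      using s1.crit[OF z(1)] by blast
    obtain T2 where T2: "T2 \<subseteq> V2 - {z2}" "card T2 < m2" "\<forall>y\<in>V2-{z2}. \<exists>t\<in>T2. E2 y t"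
      using s2.crit[OF z(2)] by blast
    let ?T = "emb1 v1 ` T1 \<union> emb2 v2 ` T2"
    have ct1: "card ?T \<le> card (emb1 v1 ` T1 :: ('a+'b) option set) + card (emb2 v2 ` T2 :: ('a+'b) option set)"
      by (rule card_Un_le)
    have ct2: "card (emb1 v1 ` T1 :: ('a+'b) option set) \<le> card T1" by (rule card_image_le)
        (use T1(1) s1.fin finite_subset in blast)
    have ct3: "card (emb2 v2 ` T2 :: ('a+'b) option set) \<le> card T2" by (rule card_image_le)
        (use T2(1) s2.fin finite_subset in blast)
    have "card ?T \<le> m1 + m2 - 2" using ct1 ct2 ct3 T1(2) T2(2) by linarith
    moreover have "?T \<subseteq> emb1 v1 ` (V1 - {z1}) \<union> emb2 v2 ` (V2 - {z2})" using T1(1) T2(1) by blast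
    moreover have "\<forall>c\<in>V1-{z1}. \<exists>t\<in>?T. ?F (emb1 v1 c) t"
    proof
      fix c assume c: "c \<in> V1 - {z1}"
      then obtain t where t: "t \<in> T1" "E1 c t" using T1(3) by blast
      have "?F (emb1 v1 c) (emb1 v1 t) = E1 c t" by (rule emb1_E) (use c T1(1) t irr1 in auto)
      then have "?F (emb1 v1 c) (emb1 v1 t)" using t by simp
      then show "\<exists>t\<in>?T. ?F (emb1 v1 c) t" using t by blast
    qed
    moreover have "\<forall>c\<in>V2-{z2}. \<exists>t\<in>?T. ?F (emb2 v2 c) t"
    proof
      fix c assume c: "c \<in> V2 - {z2}"
      then obtain t where t: "t \<in> T2" "E2 c t" using T2(3) by blast
      have "?F (emb2 v2 c) (emb2 v2 t) = E2 c t" by (rule emb2_E) (use c T2(1) t irr2 in auto)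
      then have "?F (emb2 v2 c) (emb2 v2 t)" using t by simp
      then show "\<exists>t\<in>?T. ?F (emb2 v2 c) t" using t by blast
    qed
    ultimately show ?thesis by blast
  qed
  have critx: "gamma_t (?W - {x}) (induced ?F (?W - {x})) < enat (m1 + m2 - 1)" if x: "x \<in> ?W" for x
  proof -
    have "\<exists>z1 z2. z1 \<in> V1 \<and> z2 \<in> V2 \<and> ((z1 = v1 \<and> z2 = v2 \<and> x = None) \<or> (z2 = v2 \<and> z1 \<noteq> v1 \<and> x = Some (Inl z1))
      \<or> (z1 = v1 \<and> z2 \<noteq> v2 \<and> x = Some (Inr z2)))"
    proof -
      from amalV_cases[OF x] consider "x = None" | a where "x = Some (Inl a)" "a \<in> V1" "a \<noteq> v1"
        | b where "x = Some (Inr b)" "b \<in> V2" "b \<noteq> v2" by blast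
      then show ?thesis
      proof cases
        case 1 then show ?thesis using v1(1) v2(1) by (intro exI[of _ v1] exI[of _ v2]) simp
      next
        case (2 a) then show ?thesis using v2(1) by (intro exI[of _ a] exI[of _ v2]) simp
      next
        case (3 b) then show ?thesis using v1(1) by (intro exI[of _ v1] exI[of _ b]) simp
      qed
    qed
    then obtain z1 z2 where zz: "z1 \<in> V1" "z2 \<in> V2" "(z1 = v1 \<and> z2 = v2 \<and> x = None) \<or> (z2 = v2 \<and> z1 \<noteq> v1 \<and> x = Some (Inl z1))
      \<or> (z1 = v1 \<and> z2 \<noteq> v2 \<and> x = Some (Inr z2))" by blast
    let ?U = "emb1 v1 ` (V1 - {z1}) \<union> emb2 v2 ` (V2 - {z2})"
    have zx: "x \<notin> ?U" by (rule notcover[OF zz(3)])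
    have zc: "?W - {x} \<subseteq> ?U"
    proof
      fix y assume y: "y \<in> ?W - {x}"
      show "y \<in> ?U"
        by (rule cover) (use y v1(1) v2(1) zz(3) in auto)
    qed
    have imgW: "?U \<subseteq> ?W"
    proof
      fix y assume "y \<in> ?U"
      then show "y \<in> ?W"
      proof
        assume "y \<in> emb1 v1 ` (V1 - {z1})"
        then obtain c where "c \<in> V1" "y = emb1 v1 c" by blast
        then show ?thesis using emb1_in by metis
      next
        assume "y \<in> emb2 v2 ` (V2 - {z2})"
        then obtain c where "c \<in> V2" "y = emb2 v2 c" by blast
        then show ?thesis using emb2_in by metis
      qed
    qed
    from build[OF zz(1,2)] obtain T where T: "card T \<le> m1 + m2 - 2" "T \<subseteq> ?U"
      "\<forall>c\<in>V1-{z1}. \<exists>t\<in>T. ?F (emb1 v1 c) t" "\<forall>c\<in>V2-{z2}. \<exists>t\<in>T. ?F (emb2 v2 c) t"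
      by (elim exE conjE) (rule that)
    have TW: "T \<subseteq> ?W - {x}" using T(2) zx imgW by blast
    have "total_dom (?W - {x}) (induced ?F (?W - {x})) T"
      unfolding total_dom_def
    proof (intro conjI ballI)
      show "T \<subseteq> ?W - {x}" by (rule TW)
      fix y assume y: "y \<in> ?W - {x}"
      then have "y \<in> ?U" using zc by blast
      then have "\<exists>t\<in>T. ?F y t"
      proof
        assume "y \<in> emb1 v1 ` (V1 - {z1})"
        then obtain c where "c \<in> V1 - {z1}" "y = emb1 v1 c" by blast
        then show ?thesis using T(3) by simp
      next
        assume "y \<in> emb2 v2 ` (V2 - {z2})"
        then obtain c where "c \<in> V2 - {z2}" "y = emb2 v2 c" by blast
        then show ?thesis using T(4) by simp
      qed
      then obtain t where t: "t \<in> T" "?F y t" by (rule bexE)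
      then have "induced ?F (?W - {x}) y t" using TW y unfolding induced_def by blast
      then show "\<exists>t\<in>T. induced ?F (?W - {x}) y t" using t(1) by (rule rev_bexI[rotated])
    qed
    then have "gamma_t (?W - {x}) (induced ?F (?W - {x})) \<le> enat (card T)" by (rule gamma_le)
    also have "\<dots> < enat (m1 + m2 - 1)" using T(1) mge by simp
    finally show ?thesis .
  qed
  have noiso: "no_isolated ?W ?F"
    unfolding no_isolated_def
  proof
    fix x assume x: "x \<in> ?W"
    have td: "?S \<subseteq> ?W" "\<forall>x\<in>?W. \<exists>y\<in>?S. ?F x y" using tdS unfolding total_dom_def by (rule conjunct1, rule conjunct2)
    obtain y where y: "y \<in> ?S" "?F x y" using bspec[OF td(2) x] by (rule bexE)
    have "y \<in> ?W" by (rule subsetD[OF td(1) y(1)])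
    then show "\<exists>y\<in>?W. ?F x y" using y(2) by (rule rev_bexI)
  qed
  have crit': "\<forall>v\<in>?W. \<not> (\<exists>u. is_leaf ?W ?F u \<and> ?F v u) \<longrightarrow>
        gamma_t (?W - {v}) (induced ?F (?W - {v})) < gamma_t ?W ?F"
    unfolding gam by (intro ballI impI critx)
  have mcrit: "m_gamma_t_critical (m1 + m2 - 1) ?W ?F"
    unfolding m_gamma_t_critical_def gamma_t_critical_def
    by (intro conjI noiso crit' gam)
  show ?thesis by (intro conjI G mcrit maxd cardW)
qed

end
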